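(* Let $G^*$ and $G^*_u$ be as in the context. If $S\subseteq[12]$ is such that $\mathsf{MAIS}(G^*_S)<\alpha(G^*_{S,u})$, then $S$ is an independent set in $G^*_u$ and $\bar{\chi}(G^*_{S,u})=|S|$.
   Context: Consider the three-receiver unicast index coding problem with 12 messages indexed by $[12]$, where receiver $u_i$ demands the messages indexed by $W_i$ and knows those indexed by $K_i$: $W_1=\{1,2,3,4\}$, $W_2=\{5,6,7,8\}$, $W_3=\{9,10,11,12\}$, $K_1=\{5,6,9,10\}$, $K_2=\{1,2,9,11\}$, $K_3=\{1,3,5,7\}$. $G^*$ is the directed graph on vertex set $[12]$ with a directed edge $(a,b)$ iff $b\in K_i$, where $i$ is the unique index with $a\in W_i$. $G^*_u$ is the undirected graph on $[12]$ in which $\{a,b\}$ is an edge iff both $(a,b)$ and $(b,a)$ are edges of $G^*$. For $S\subseteq[12]$, $G^*_S$ and $G^*_{S,u}$ are the subgraphs of $G^*$ and $G^*_u$ induced by $S$. $\mathsf{MAIS}(D)$ is the maximum number of vertices of an acyclic induced subgraph of a directed graph $D$; $\alpha$ and $\bar{\chi}$ denote independence number and clique cover number. *)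

theory Defs
  imports Main
begin

(* The index coding instance *)
definition W :: "nat \<Rightarrow> nat set" where
  "W i = (if i = 1 then {1,2,3,4} else if i = 2 then {5,6,7,8}
          else if i = 3 then {9,10,11,12} else {})"

definition K :: "nat \<Rightarrow> nat set" where
  "K i = (if i = 1 then {5,6,9,10} else if i = 2 then {1,2,9,11}
          else if i = 3 then {1,3,5,7} else {})"

definition Gstar :: "nat \<Rightarrow> nat \<Rightarrow> bool" where
  "Gstar a b \<longleftrightarrow> (\<exists>i\<in>{1,2,3}. a \<in> W i \<and> b \<in> K i)"

definition Gu :: "nat \<Rightarrow> nat \<Rightarrow> bool" where
  "Gu a b \<longleftrightarrow> Gstar a b \<and> Gstar b a"

definition induced_edges :: "('a \<Rightarrow> 'a \<Rightarrow> bool) \<Rightarrow> 'a set \<Rightarrow> ('a \<times> 'a) set" where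
  "induced_edges E T = {(a,b). a \<in> T \<and> b \<in> T \<and> E a b}"

definition MAIS :: "('a \<Rightarrow> 'a \<Rightarrow> bool) \<Rightarrow> 'a set \<Rightarrow> nat" where
  "MAIS E S = Max {card T | T. T \<subseteq> S \<and> acyclic (induced_edges E T)}"

definition indep_set :: "('a \<Rightarrow> 'a \<Rightarrow> bool) \<Rightarrow> 'a set \<Rightarrow> bool" where
  "indep_set E T \<longleftrightarrow> (\<forall>a\<in>T. \<forall>b\<in>T. \<not> E a b)"

definition alpha :: "('a \<Rightarrow> 'a \<Rightarrow> bool) \<Rightarrow> 'a set \<Rightarrow> nat" where
  "alpha E S = Max {card T | T. T \<subseteq> S \<and> indep_set E T}"

definition is_clique :: "('a \<Rightarrow> 'a \<Rightarrow> bool) \<Rightarrow> 'a set \<Rightarrow> bool" where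
  "is_clique E C \<longleftrightarrow> (\<forall>a\<in>C. \<forall>b\<in>C. a \<noteq> b \<longrightarrow> E a b)"

definition clique_cover :: "('a \<Rightarrow> 'a \<Rightarrow> bool) \<Rightarrow> 'a set \<Rightarrow> 'a set set \<Rightarrow> bool" where
  "clique_cover E S P \<longleftrightarrow> finite P \<and> \<Union>P = S \<and> {} \<notin> P \<and>
     (\<forall>C\<in>P. \<forall>D\<in>P. C \<noteq> D \<longrightarrow> C \<inter> D = {}) \<and> (\<forall>C\<in>P. is_clique E C)"

definition clique_cover_number :: "('a \<Rightarrow> 'a \<Rightarrow> bool) \<Rightarrow> 'a set \<Rightarrow> nat" where
  "clique_cover_number E S = Min {card P | P. clique_cover E S P}"

end

theory Submission
  imports Defs
begin

lemma rank_acyclic: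
  fixes f :: "nat \<Rightarrow> nat"
  assumes "\<And>a b. (a,b) \<in> R \<Longrightarrow> f a < f b"
  shows "acyclic R"
proof -
  have "f x < f y" if "(x,y) \<in> R\<^sup>+" for x y
    using that by (induction rule: trancl_induct) (auto dest: assms)
  then show ?thesis unfolding acyclic_def by fastforce
qed

lemma acyc_by_rank:
  fixes f :: "nat \<Rightarrow> nat"
  assumes "\<forall>a\<in>A. \<forall>b\<in>A. Gstar a b \<longrightarrow> f a < f b"
  shows "acyclic (induced_edges Gstar A)"
  using assms by (intro rank_acyclic[of _ f]) (auto simp: induced_edges_def)

lemma acyc_sub:
  assumes "acyclic (induced_edges Gstar A)" "T \<subseteq> A"
  shows "acyclic (induced_edges Gstar T)"
  using assms(1) by (rule acyclic_subset) (use assms(2) in \<open>auto simp: induced_edges_def\<close>)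

definition rk :: "nat list \<Rightarrow> nat \<Rightarrow> nat" where
  "rk L x = length (takeWhile (\<lambda>y. y \<noteq> x) L)"

lemma acyc_list:
  assumes "\<forall>a\<in>set L. \<forall>b\<in>set L. Gstar a b \<longrightarrow> rk L a < rk L b"
  shows "acyclic (induced_edges Gstar (set L))"
  using assms by (rule acyc_by_rank)

lemmas gsimps = Gstar_def W_def K_def rk_def

lemma propB: "\<not>(p1 \<and> p5) \<Longrightarrow> \<not>(p1 \<and> p6) \<Longrightarrow> \<not>(p1 \<and> p9) \<Longrightarrow> \<not>(p1 \<and> p10) \<Longrightarrow> \<not>(p2 \<and> p5) \<Longrightarrow> \<not>(p2 \<and> p6) \<Longrightarrow> \<not>(p3 \<and> p9) \<Longrightarrow> \<not>(p3 \<and> p10) \<Longrightarrow> \<not>(p5 \<and> p9) \<Longrightarrow> \<not>(p5 \<and> p11) \<Longrightarrow> \<not>(p7 \<and> p9) \<Longrightarrow> \<not>(p7 \<and> p11) \<Longrightarrow> \<not>(\<not>p5 \<and> \<not>p6 \<and> \<not>p9 \<and> \<not>p10 \<and> \<not>p11) \<Longrightarrow> \<not>(\<not>p5 \<and> \<not>p6 \<and> \<not>p7 \<and> \<not>p9 \<and> \<not>p10) \<Longrightarrow> \<not>(\<not>p1 \<and> \<not>p3 \<and> \<not>p5 \<and> \<not>p6 \<and> \<not>p7) \<Longrightarrow> \<not>(\<not>p1 \<and> \<not>p2 \<and> \<not>p9 \<and> \<not>p10 \<and> \<not>p11) \<Longrightarrow> \<not>(\<not>p1 \<and> \<not>p2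 \<and> \<not>p3 \<and> \<not>p9 \<and> \<not>p11) \<Longrightarrow> \<not>(\<not>p1 \<and> \<not>p2 \<and> \<not>p3 \<and> \<not>p5 \<and> \<not>p7) \<Longrightarrow> (p2 \<and> p7 \<and> p10 \<and> \<not>p1 \<and> \<not>p3 \<and> \<not>p5 \<and> \<not>p6 \<and> \<not>p9 \<and> \<not>p11) \<or> (p3 \<and> p6 \<and> p11 \<and> \<not>p1 \<and> \<not>p2 \<and> \<not>p5 \<and> \<not>p7 \<and> \<not>p9 \<and> \<not>p10)"
  by sat

lemma acycA0: "acyclic (induced_edges Gstar {4, 8, 12, 3, 7, 1, 2})"
  using acyc_list[of "[4, 8, 12, 3, 7, 1, 2]"] by (simp add: gsimps)

lemma acycA1: "acyclic (induced_edges Gstar {4, 8, 12, 2, 11, 1, 3})"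
  using acyc_list[of "[4, 8, 12, 2, 11, 1, 3]"] by (simp add: gsimps)

lemma acycA2: "acyclic (induced_edges Gstar {4, 8, 12, 2, 11, 9, 10})"
  using acyc_list[of "[4, 8, 12, 2, 11, 9, 10]"] by (simp add: gsimps)

lemma acycA3: "acyclic (induced_edges Gstar {4, 8, 12, 3, 7, 5, 6})"
  using acyc_list[of "[4, 8, 12, 3, 7, 5, 6]"] by (simp add: gsimps)

lemma acycA4: "acyclic (induced_edges Gstar {4, 8, 12, 6, 10, 5, 7})"
  using acyc_list[of "[4, 8, 12, 6, 10, 5, 7]"] by (simp add: gsimps)

lemma acycA5: "acyclic (induced_edges Gstar {4, 8, 12, 6, 10, 9, 11})"
  using acyc_list[of "[4, 8, 12, 6, 10, 9, 11]"] by (simp add: gsimps)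

lemma swap0_1: "acyclic (induced_edges Gstar {4, 8, 12, 7, 1, 2})"
  using acyc_list[of "[4, 8, 12, 7, 1, 2]"] by (simp add: gsimps)

lemma swap0_3: "acyclic (induced_edges Gstar {4, 8, 12, 3, 7, 2})"
  using acyc_list[of "[4, 8, 12, 3, 7, 2]"] by (simp add: gsimps)

lemma swap0_5: "acyclic (induced_edges Gstar {4, 8, 12, 10, 5, 7})"
  using acyc_list[of "[4, 8, 12, 10, 5, 7]"] by (simp add: gsimps)

lemma swap0_6: "acyclic (induced_edges Gstar {4, 8, 12, 6, 10, 7})"
  using acyc_list[of "[4, 8, 12, 6, 10, 7]"] by (simp add: gsimps)

lemma swap0_9: "acyclic (induced_edges Gstar {4, 8, 12, 2, 9, 10})"
  using acyc_list[of "[4, 8, 12, 2, 9, 10]"] by (simp add: gsimps)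

lemma swap0_11: "acyclic (induced_edges Gstar {4, 8, 12, 2, 11, 10})"
  using acyc_list[of "[4, 8, 12, 2, 11, 10]"] by (simp add: gsimps)

lemma swap1_1: "acyclic (induced_edges Gstar {4, 8, 12, 11, 1, 3})"
  using acyc_list[of "[4, 8, 12, 11, 1, 3]"] by (simp add: gsimps)

lemma swap1_2: "acyclic (induced_edges Gstar {4, 8, 12, 2, 11, 3})"
  using acyc_list[of "[4, 8, 12, 2, 11, 3]"] by (simp add: gsimps)

lemma swap1_5: "acyclic (induced_edges Gstar {4, 8, 12, 3, 5, 6})"
  using acyc_list[of "[4, 8, 12, 3, 5, 6]"] by (simp add: gsimps)

lemma swap1_7: "acyclic (induced_edges Gstar {4, 8, 12, 3, 7, 6})"
  using acyc_list[of "[4, 8, 12, 3, 7, 6]"] by (simp add: gsimps)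

lemma swap1_9: "acyclic (induced_edges Gstar {4, 8, 12, 6, 9, 11})"
  using acyc_list[of "[4, 8, 12, 6, 9, 11]"] by (simp add: gsimps)

lemma swap1_10: "acyclic (induced_edges Gstar {4, 8, 12, 6, 10, 11})"
  using acyc_list[of "[4, 8, 12, 6, 10, 11]"] by (simp add: gsimps)

lemma e12: "{1..12::nat} = {1,2,3,4,5,6,7,8,9,10,11,12}" by (auto; presburger)

lemma cc_indep:
  assumes fin: "finite S" and ind: "indep_set Gu S"
  shows "clique_cover_number Gu S = card S"
proof -
  have "{card P |P. clique_cover Gu S P} = {card S}"
  proof
    show "{card P |P. clique_cover Gu S P} \<subseteq> {card S}"
    proof
      fix n assume "n \<in> {card P |P. clique_cover Gu S P}"
      then obtain P where n: "n = card P" and P: "clique_cover Gu S P" by blast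
      have sing: "card C = 1" if "C \<in> P" for C
      proof -
        have "C \<noteq> {}" "C \<subseteq> S" "is_clique Gu C" using P that unfolding clique_cover_def by auto
        then obtain a where a: "a \<in> C" by blast
        have "C = {a}"
        proof (rule ccontr)
          assume "C \<noteq> {a}"
          then obtain b where "b \<in> C" "b \<noteq> a" using a by blast
          then have "Gu b a" using \<open>is_clique Gu C\<close> a unfolding is_clique_def by blast
          then show False using ind \<open>C \<subseteq> S\<close> a \<open>b \<in> C\<close> unfolding indep_set_def by blast
        qed
        then show ?thesis by simp
      qed
      have fP: "finite P" and U: "\<Union>P = S" using P unfolding clique_cover_def by auto
      have fC: "\<forall>C\<in>P. finite C" using U fin by (meson Union_upper finite_subset)
      have dj: "pairwise disjnt P" using P unfolding clique_cover_def pairwise_def disjnt_def by blast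
      have "card S = sum card P" using card_Union_disjoint[OF dj] fC U by simp
      also have "\<dots> = sum (\<lambda>_. 1) P" using sing by (rule sum.cong[OF refl])
      also have "\<dots> = card P" by simp
      finally show "n \<in> {card S}" using n by simp
    qed
  next
    let ?P = "(\<lambda>x. {x}) ` S"
    have "clique_cover Gu S ?P" unfolding clique_cover_def is_clique_def using fin by auto
    moreover have "card ?P = card S" by (rule card_image) (auto simp: inj_on_def)
    ultimately show "{card S} \<subseteq> {card P |P. clique_cover Gu S P}" by force
  qed
  then show ?thesis unfolding clique_cover_number_def by simp
qed

theorem corollary1:
  fixes S :: "nat set"
  assumes "S \<subseteq> {1..12}"
    and "MAIS Gstar S < alpha Gu S"
  shows "indep_set Gu S \<and> clique_cover_number Gu S = card S"
proof -
  have fin: "finite S" by (rule finite_subset[OF assms(1)]) simp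
  have finP: "finite {card T |T. T \<subseteq> S \<and> P T}" for P
    by (rule finite_subset[of _ "card ` Pow S"]) (use fin in auto)
  have mais: "card T \<le> MAIS Gstar S" if "T \<subseteq> S" "acyclic (induced_edges Gstar T)" for T
    unfolding MAIS_def by (rule Max_ge[OF finP[of "\<lambda>T. acyclic (induced_edges Gstar T)"]]) (use that in blast)
  have "indep_set Gu {}" by (simp add: indep_set_def)
  then have ne: "{card T |T. T \<subseteq> S \<and> indep_set Gu T} \<noteq> {}" by blast
  have "alpha Gu S \<in> {card T |T. T \<subseteq> S \<and> indep_set Gu T}" unfolding alpha_def
    by (rule Max_in[OF finP[of "indep_set Gu"] ne])
  then obtain T where T: "T \<subseteq> S" "indep_set Gu T" "card T = alpha Gu S"
    unfolding mem_Collect_eq by (elim exE conjE) (rule that, assumption+, simp)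
  have finT: "finite T" by (rule finite_subset[OF T(1) fin])
  have noacyc: "\<not> acyclic (induced_edges Gstar T')" if "T' \<subseteq> S" "card T \<le> card T'" for T'
    using mais[OF that(1)] that(2) T(3) assms(2) by linarith
  have T12: "T \<subseteq> {1,2,3,4,5,6,7,8,9,10,11,12}" using T(1) assms(1) unfolding e12 by blast
  have sub: "T \<subseteq> A" if "\<forall>x \<in> {1,2,3,4,5,6,7,8,9,10,11,12} - A. x \<notin> T" for A
    using that T12 by blast
  have nA: "\<not> T \<subseteq> A" if "acyclic (induced_edges Gstar A)" for A
    using noacyc[OF T(1) order_refl] acyc_sub[OF that] by blast
  have swp: False if "y \<in> S" "y \<notin> T" "x \<in> T" "insert y (T - {x}) \<subseteq> A"
     "acyclic (induced_edges Gstar A)" for x y A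
  proof -
    have "card T > 0" using that(3) finT card_gt_0_iff by blast
    then have "card (insert y (T - {x})) = card T" using that finT
      by simp
    moreover have "insert y (T - {x}) \<subseteq> S" using that T(1) by blast
    ultimately show False using noacyc acyc_sub[OF that(5) that(4)] by simp
  qed
  have Gu_N: "a \<in> {1,2,3,5,6,7,9,10,11} \<and> b \<in> {1,2,3,5,6,7,9,10,11}" if "Gu a b" for a b
    using that unfolding Gu_def Gstar_def W_def K_def by auto
  have edges: "\<not>(1 \<in> T \<and> 5 \<in> T)" "\<not>(1 \<in> T \<and> 6 \<in> T)" "\<not>(1 \<in> T \<and> 9 \<in> T)"
    "\<not>(1 \<in> T \<and> 10 \<in> T)" "\<not>(2 \<in> T \<and> 5 \<in> T)" "\<not>(2 \<in> T \<and> 6 \<in> T)"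
    "\<not>(3 \<in> T \<and> 9 \<in> T)" "\<not>(3 \<in> T \<and> 10 \<in> T)" "\<not>(5 \<in> T \<and> 9 \<in> T)"
    "\<not>(5 \<in> T \<and> 11 \<in> T)" "\<not>(7 \<in> T \<and> 9 \<in> T)" "\<not>(7 \<in> T \<and> 11 \<in> T)"
    using T(2) unfolding indep_set_def Gu_def by (auto simp: Gstar_def W_def K_def)
  have ind: "indep_set Gu S"
  proof -
    have nc0: "\<not> (5 \<notin> T \<and> 6 \<notin> T \<and> 9 \<notin> T \<and> 10 \<notin> T \<and> 11 \<notin> T)"
    proof
      assume h: "5 \<notin> T \<and> 6 \<notin> T \<and> 9 \<notin> T \<and> 10 \<notin> T \<and> 11 \<notin> T"
      have "T \<subseteq> {4, 8, 12, 3, 7, 1, 2}" using T12 h by auto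
      then show False using nA[OF acycA0] by blast
    qed
    have nc1: "\<not> (5 \<notin> T \<and> 6 \<notin> T \<and> 7 \<notin> T \<and> 9 \<notin> T \<and> 10 \<notin> T)"
    proof
      assume h: "5 \<notin> T \<and> 6 \<notin> T \<and> 7 \<notin> T \<and> 9 \<notin> T \<and> 10 \<notin> T"
      have "T \<subseteq> {4, 8, 12, 2, 11, 1, 3}" using T12 h by auto
      then show False using nA[OF acycA1] by blast
    qed
    have nc2: "\<not> (1 \<notin> T \<and> 3 \<notin> T \<and> 5 \<notin> T \<and> 6 \<notin> T \<and> 7 \<notin> T)"
    proof
      assume h: "1 \<notin> T \<and> 3 \<notin> T \<and> 5 \<notin> T \<and> 6 \<notin> T \<and> 7 \<notin> T"
      have "T \<subseteq> {4, 8, 12, 2, 11, 9, 10}" using T12 h by auto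
      then show False using nA[OF acycA2] by blast
    qed
    have nc3: "\<not> (1 \<notin> T \<and> 2 \<notin> T \<and> 9 \<notin> T \<and> 10 \<notin> T \<and> 11 \<notin> T)"
    proof
      assume h: "1 \<notin> T \<and> 2 \<notin> T \<and> 9 \<notin> T \<and> 10 \<notin> T \<and> 11 \<notin> T"
      have "T \<subseteq> {4, 8, 12, 3, 7, 5, 6}" using T12 h by auto
      then show False using nA[OF acycA3] by blast
    qed
    have nc4: "\<not> (1 \<notin> T \<and> 2 \<notin> T \<and> 3 \<notin> T \<and> 9 \<notin> T \<and> 11 \<notin> T)"
    proof
      assume h: "1 \<notin> T \<and> 2 \<notin> T \<and> 3 \<notin> T \<and> 9 \<notin> T \<and> 11 \<notin> T"
      have "T \<subseteq> {4, 8, 12, 6, 10, 5, 7}" using T12 h by auto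
      then show False using nA[OF acycA4] by blast
    qed
    have nc5: "\<not> (1 \<notin> T \<and> 2 \<notin> T \<and> 3 \<notin> T \<and> 5 \<notin> T \<and> 7 \<notin> T)"
    proof
      assume h: "1 \<notin> T \<and> 2 \<notin> T \<and> 3 \<notin> T \<and> 5 \<notin> T \<and> 7 \<notin> T"
      have "T \<subseteq> {4, 8, 12, 6, 10, 9, 11}" using T12 h by auto
      then show False using nA[OF acycA5] by blast
    qed
    have c12: "(2 \<in> T \<and> 7 \<in> T \<and> 10 \<in> T \<and> T \<subseteq> {2,4,7,8,10,12}) \<or>
               (3 \<in> T \<and> 6 \<in> T \<and> 11 \<in> T \<and> T \<subseteq> {3,4,6,8,11,12})"
    proof -
      have "(2 \<in> T \<and> 7 \<in> T \<and> 10 \<in> T \<and> 1 \<notin> T \<and> 3 \<notin> T \<and> 5 \<notin> T \<and> 6 \<notin> T \<and> 9 \<notin> T \<and> 11 \<notin> T) \<or>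
            (3 \<in> T \<and> 6 \<in> T \<and> 11 \<in> T \<and> 1 \<notin> T \<and> 2 \<notin> T \<and> 5 \<notin> T \<and> 7 \<notin> T \<and> 9 \<notin> T \<and> 10 \<notin> T)"
        by (rule propB[OF edges nc0 nc1 nc2 nc3 nc4 nc5])
      then show ?thesis
      proof (elim disjE)
        assume h: "2 \<in> T \<and> 7 \<in> T \<and> 10 \<in> T \<and> 1 \<notin> T \<and> 3 \<notin> T \<and> 5 \<notin> T \<and> 6 \<notin> T \<and> 9 \<notin> T \<and> 11 \<notin> T"
        have "T \<subseteq> {2,4,7,8,10,12}" using T12 h by auto
        then show ?thesis using h by blast
      next
        assume h: "3 \<in> T \<and> 6 \<in> T \<and> 11 \<in> T \<and> 1 \<notin> T \<and> 2 \<notin> T \<and> 5 \<notin> T \<and> 7 \<notin> T \<and> 9 \<notin> T \<and> 10 \<notin> T"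
        have "T \<subseteq> {3,4,6,8,11,12}" using T12 h by auto
        then show ?thesis using h by blast
      qed
    qed
    show ?thesis
    proof (rule ccontr)
      assume "\<not> indep_set Gu S"
      then obtain a b where ab: "a \<in> S" "b \<in> S" "Gu a b" unfolding indep_set_def by blast
      have "\<exists>y. y \<in> S \<and> y \<notin> T \<and> Gu a b \<and> (y = a \<or> y = b)"
        using ab T(2) unfolding indep_set_def by blast
      then obtain y where y: "y \<in> S" "y \<notin> T" "y \<in> {1,2,3,5,6,7,9,10,11}"
        using Gu_N[OF ab(3)] by blast
      from c12 show False
      proof (elim disjE conjE)
        assume h: "2 \<in> T" "7 \<in> T" "10 \<in> T" "T \<subseteq> {2,4,7,8,10,12}"
        moreover have "y = 1 \<or> y = 3 \<or> y = 5 \<or> y = 6 \<or> y = 9 \<or> y = 11" using y h by auto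
        moreover have "y = 1 \<Longrightarrow> False"
          using swp[OF y(1) y(2), of 10 "{4, 8, 12, 7, 1, 2}"] swap0_1 h by auto
        moreover have "y = 3 \<Longrightarrow> False"
          using swp[OF y(1) y(2), of 10 "{4, 8, 12, 3, 7, 2}"] swap0_3 h by auto
        moreover have "y = 5 \<Longrightarrow> False"
          using swp[OF y(1) y(2), of 2 "{4, 8, 12, 10, 5, 7}"] swap0_5 h by auto
        moreover have "y = 6 \<Longrightarrow> False"
          using swp[OF y(1) y(2), of 2 "{4, 8, 12, 6, 10, 7}"] swap0_6 h by auto
        moreover have "y = 9 \<Longrightarrow> False"
          using swp[OF y(1) y(2), of 7 "{4, 8, 12, 2, 9, 10}"] swap0_9 h by auto
        moreover have "y = 11 \<Longrightarrow> False"
          using swp[OF y(1) y(2), of 7 "{4, 8, 12, 2, 11, 10}"] swap0_11 h by auto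
        ultimately show False by blast
      next
        assume h: "3 \<in> T" "6 \<in> T" "11 \<in> T" "T \<subseteq> {3,4,6,8,11,12}"
        moreover have "y = 1 \<or> y = 2 \<or> y = 5 \<or> y = 7 \<or> y = 9 \<or> y = 10" using y h by auto
        moreover have "y = 1 \<Longrightarrow> False"
          using swp[OF y(1) y(2), of 6 "{4, 8, 12, 11, 1, 3}"] swap1_1 h by auto
        moreover have "y = 2 \<Longrightarrow> False"
          using swp[OF y(1) y(2), of 6 "{4, 8, 12, 2, 11, 3}"] swap1_2 h by auto
        moreover have "y = 5 \<Longrightarrow> False"
          using swp[OF y(1) y(2), of 11 "{4, 8, 12, 3, 5, 6}"] swap1_5 h by auto
        moreover have "y = 7 \<Longrightarrow> False"
          using swp[OF y(1) y(2), of 11 "{4, 8, 12, 3, 7, 6}"] swap1_7 h by auto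
        moreover have "y = 9 \<Longrightarrow> False"
          using swp[OF y(1) y(2), of 3 "{4, 8, 12, 6, 9, 11}"] swap1_9 h by auto
        moreover have "y = 10 \<Longrightarrow> False"
          using swp[OF y(1) y(2), of 3 "{4, 8, 12, 6, 10, 11}"] swap1_10 h by auto
        ultimately show False by blast
      qed
    qed
  qed
  show ?thesis using ind cc_indep[OF fin] by blast
qed

end
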